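(* Let $0<p\leq 1$, let $A\in\mathbb{R}^{m\times N}$ with $N=nd$, and let $x\in\mathbb{R}^N$ be block $k$-sparse with block support $T_0$, and $y=Ax$. Let $\tilde T\subset\{1,\dots,n\}$ be an arbitrary set, and define $\rho,\alpha\geq 0$ by $|\tilde T|=\rho k$ and $|\tilde T\cap T_0|=\alpha\rho k$. Let $0\leq\omega\leq 1$ and set $\gamma=\omega+(1-\omega)(1+\rho-2\alpha\rho)^{1-p/2}$. Suppose there exists an integer $a$ with $a\geq(1-\alpha)\rho$ and $a>1$ such that $$\delta_{ak}+\frac{a^{1-p/2}}{\gamma}\delta_{(a+1)k}<\frac{a^{1-p/2}}{\gamma}-1 .$$ Then $x$ is the unique solution of $$\min_{z\in\mathbb{R}^N}\sum_{i=1}^n w_i\lVert z[i]\rVert_2^p\quad\text{subject to}\quad Az=y,\qquad w_i=\begin{cases}\omega,& i\in\tilde T\\ 1,& i\in\tilde T^c.\end{cases}$$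
   Context: Vectors $x\in\mathbb{R}^N$, $N=nd$, are split into $n$ consecutive blocks of length $d$: $x[i]=(x_{(i-1)d+1},\dots,x_{id})^T$, $i=1,\dots,n$. A vector is block $k$-sparse if at most $k$ blocks $x[i]$ are nonzero; its block support is the set of indices $i$ with $x[i]\neq 0$. For $v\in\mathbb{R}^m$, $\lVert v\rVert_p^p=\sum_{i=1}^m|v_i|^p$. The block $p$-restricted isometry constant $\delta_k$ of $A$ (of order $k$) is the smallest positive number such that $(1-\delta_k)\lVert z\rVert_2^p\leq\lVert Az\rVert_p^p\leq(1+\delta_k)\lVert z\rVert_2^p$ for all block $k$-sparse $z\in\mathbb{R}^N$. *)

theory Defs
  imports Complex_Main
begin

text \<open>Conventions: a vector in R^N (N = n*d) is a function nat => real that vanishes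
  outside {0..<N}; indices are 0-based, so block i (i < n) consists of the entries
  i*d, ..., i*d + d - 1. An m x N matrix is a function nat => nat => real
  (row, column), only entries with row < m and column < N matter.\<close>

definition vec_in :: "nat \<Rightarrow> (nat \<Rightarrow> real) \<Rightarrow> bool" where
  "vec_in N z \<longleftrightarrow> (\<forall>l\<ge>N. z l = 0)"

definition mat_vec :: "nat \<Rightarrow> nat \<Rightarrow> (nat \<Rightarrow> nat \<Rightarrow> real) \<Rightarrow> (nat \<Rightarrow> real) \<Rightarrow> (nat \<Rightarrow> real)" where
  "mat_vec m N A z = (\<lambda>j. if j < m then (\<Sum>l<N. A j l * z l) else 0)"

definition block :: "nat \<Rightarrow> (nat \<Rightarrow> real) \<Rightarrow> nat \<Rightarrow> (nat \<Rightarrow> real)" where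
  "block d z i = (\<lambda>l. if l < d then z (i * d + l) else 0)"

definition block_norm2 :: "nat \<Rightarrow> (nat \<Rightarrow> real) \<Rightarrow> nat \<Rightarrow> real" where
  "block_norm2 d z i = sqrt (\<Sum>l<d. (z (i * d + l))\<^sup>2)"

definition block_support :: "nat \<Rightarrow> nat \<Rightarrow> (nat \<Rightarrow> real) \<Rightarrow> nat set" where
  "block_support n d z = {i. i < n \<and> block d z i \<noteq> (\<lambda>_. 0)}"

definition block_sparse :: "nat \<Rightarrow> nat \<Rightarrow> nat \<Rightarrow> (nat \<Rightarrow> real) \<Rightarrow> bool" where
  "block_sparse n d k z \<longleftrightarrow> card (block_support n d z) \<le> k"

definition norm2 :: "nat \<Rightarrow> (nat \<Rightarrow> real) \<Rightarrow> real" where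
  "norm2 N z = sqrt (\<Sum>l<N. (z l)\<^sup>2)"

definition pnorm_pow :: "nat \<Rightarrow> real \<Rightarrow> (nat \<Rightarrow> real) \<Rightarrow> real" where
  "pnorm_pow m p v = (\<Sum>j<m. \<bar>v j\<bar> powr p)"

definition block_p_ric :: "nat \<Rightarrow> nat \<Rightarrow> nat \<Rightarrow> real \<Rightarrow> (nat \<Rightarrow> nat \<Rightarrow> real) \<Rightarrow> nat \<Rightarrow> real" where
  "block_p_ric m n d p A k = Inf {\<delta>. \<delta> > 0 \<and>
     (\<forall>z. vec_in (n * d) z \<and> block_sparse n d k z \<longrightarrow>
        (1 - \<delta>) * norm2 (n * d) z powr p \<le> pnorm_pow m p (mat_vec m (n * d) A z) \<and>
        pnorm_pow m p (mat_vec m (n * d) A z) \<le> (1 + \<delta>) * norm2 (n * d) z powr p)}"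

definition weighted_obj :: "nat \<Rightarrow> nat \<Rightarrow> real \<Rightarrow> real \<Rightarrow> nat set \<Rightarrow> (nat \<Rightarrow> real) \<Rightarrow> real" where
  "weighted_obj n d p \<omega> Tt z = (\<Sum>i<n. (if i \<in> Tt then \<omega> else 1) * block_norm2 d z i powr p)"

end

theory Submission
  imports Defs "HOL-Analysis.L2_Norm" "HOL-Analysis.Convex"
begin

lemma powr_subadd:
  fixes a b p :: real
  assumes "0 \<le> a" "0 \<le> b" "0 < p" "p \<le> 1"
  shows "(a + b) powr p \<le> a powr p + b powr p"
proof (cases "a + b = 0")
  case True
  then have "a = 0" "b = 0" using assms by auto
  then show ?thesis by simp
next
  case False
  define s where "s = a + b"
  have s: "s > 0" using False assms s_def by auto
  have ha: "a / s \<le> (a / s) powr p"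
    using powr_mono'[of p 1 "a/s"] assms s s_def by (simp add: divide_le_eq_1)
  have hb: "b / s \<le> (b / s) powr p"
    using powr_mono'[of p 1 "b/s"] assms s s_def by (simp add: divide_le_eq_1)
  have "s powr p = s powr p * (a / s + b / s)" using s s_def by (simp add: add_divide_distrib[symmetric])
  also have "\<dots> \<le> s powr p * ((a / s) powr p + (b / s) powr p)"
    using ha hb by (intro mult_left_mono) auto
  also have "\<dots> = a powr p + b powr p"
    using s assms by (simp add: powr_divide distrib_left)
  finally show ?thesis by (simp add: s_def)
qed

lemma abs_sum_powr:
  fixes g :: "'a \<Rightarrow> real"
  assumes "finite C" "0 < p" "p \<le> 1"
  shows "\<bar>\<Sum>c\<in>C. g c\<bar> powr p \<le> (\<Sum>c\<in>C. \<bar>g c\<bar> powr p)"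
  using assms(1)
proof (induction C rule: finite_induct)
  case empty
  then show ?case by simp
next
  case (insert x F)
  have "\<bar>\<Sum>c\<in>insert x F. g c\<bar> powr p = \<bar>g x + (\<Sum>c\<in>F. g c)\<bar> powr p"
    using insert by simp
  also have "\<dots> \<le> (\<bar>g x\<bar> + \<bar>\<Sum>c\<in>F. g c\<bar>) powr p"
    using assms by (intro powr_mono2) (auto simp: abs_triangle_ineq)
  also have "\<dots> \<le> \<bar>g x\<bar> powr p + \<bar>\<Sum>c\<in>F. g c\<bar> powr p"
    using assms by (intro powr_subadd) auto
  also have "\<dots> \<le> \<bar>g x\<bar> powr p + (\<Sum>c\<in>F. \<bar>g c\<bar> powr p)"
    using insert by simp
  finally show ?case using insert by simp
qed

lemma tangent_powr:
  fixes u r :: real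
  assumes "0 < r" "r \<le> 1" "0 \<le> u"
  shows "u powr r \<le> 1 - r + r * u"
proof (cases "u = 0")
  case True then show ?thesis using assms by simp
next
  case False
  then show ?thesis
    using Youngs_inequality_0[of r "1 - r" u 1] assms by simp
qed

lemma power_mean:
  fixes f :: "'a \<Rightarrow> real"
  assumes "finite S" "0 < p" "p \<le> 1" "\<And>i. i \<in> S \<Longrightarrow> 0 \<le> f i"
  shows "(\<Sum>i\<in>S. f i powr p) \<le> real (card S) powr (1 - p / 2) * sqrt (\<Sum>i\<in>S. (f i)\<^sup>2) powr p"
proof -
  define Q where "Q = (\<Sum>i\<in>S. (f i)\<^sup>2)"
  define c where "c = real (card S)"
  define r where "r = p / 2"
  have Q0: "Q \<ge> 0" unfolding Q_def by (intro sum_nonneg) auto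
  show ?thesis
  proof (cases "Q = 0")
    case True
    then have "\<forall>i\<in>S. (f i)\<^sup>2 = 0" unfolding Q_def using assms
      by (subst sum_nonneg_eq_0_iff[symmetric]) auto
    then have "\<forall>i\<in>S. f i = 0" by simp
    then show ?thesis using assms by simp
  next
    case False
    then have Qp: "Q > 0" using Q0 by simp
    then have "S \<noteq> {}" unfolding Q_def by auto
    then have cp: "c > 0" using assms(1) unfolding c_def by (simp add: card_gt_0_iff)
    define M where "M = Q / c"
    have Mp: "M > 0" using Qp cp M_def by simp
    have r: "0 < r" "r \<le> 1" using assms r_def by auto
    have each: "f i powr p \<le> M powr r * (1 - r + r * ((f i)\<^sup>2 / M))" if "i \<in> S" for i
    proof -
      have "f i powr p = ((f i)\<^sup>2) powr r"
      proof (cases "f i = 0")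
        case True then show ?thesis using r by simp
      next
        case False
        then have fp: "f i > 0" using assms(4)[OF that] by simp
        have e: "f i powr p = (f i powr 2) powr r" unfolding powr_powr r_def by simp
        then show ?thesis using fp by simp
      qed
      also have "\<dots> = M powr r * (((f i)\<^sup>2) / M) powr r"
        using Mp by (simp add: powr_divide)
      also have "\<dots> \<le> M powr r * (1 - r + r * ((f i)\<^sup>2 / M))"
        using tangent_powr[OF r, of "(f i)\<^sup>2 / M"] Mp by (intro mult_left_mono) auto
      finally show ?thesis .
    qed
    have "(\<Sum>i\<in>S. f i powr p) \<le> (\<Sum>i\<in>S. M powr r * (1 - r + r * ((f i)\<^sup>2 / M)))"
      by (intro sum_mono each)
    also have "\<dots> = (\<Sum>i\<in>S. M powr r * (1 - r) + (M powr r * r / M) * (f i)\<^sup>2)"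
      by (intro sum.cong) (auto simp: algebra_simps)
    also have "\<dots> = c * (M powr r * (1 - r)) + (M powr r * r / M) * Q"
      by (simp add: sum.distrib sum_distrib_left[symmetric] sum_divide_distrib[symmetric] c_def Q_def)
    also have "\<dots> = M powr r * c"
      using cp Qp by (simp add: M_def field_simps)
    also have "\<dots> = c powr (1 - r) * Q powr r"
      using cp Qp by (simp add: M_def powr_divide powr_diff field_simps)
    also have "Q powr r = sqrt Q powr p"
    proof -
      have "sqrt Q = Q powr (1/2)" using Q0 by (simp add: powr_half_sqrt)
      then have "sqrt Q powr p = Q powr (1/2 * p)" by (simp only: powr_powr)
      then show ?thesis by (simp add: r_def)
    qed
    finally show ?thesis by (simp add: c_def Q_def r_def)
  qed
qed

definition restr :: "nat \<Rightarrow> nat set \<Rightarrow> (nat \<Rightarrow> real) \<Rightarrow> nat \<Rightarrow> real" where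
  "restr d S h = (\<lambda>l. if l div d \<in> S then h l else 0)"

lemma sum_block_one:
  fixes f :: "nat \<Rightarrow> real"
  shows "sum f {i * d..<i * d + d} = (\<Sum>j<d. f (i * d + j))"
proof -
  have "sum f {0 + i * d..<d + i * d} = (\<Sum>j=0..<d. f (j + i * d))"
    by (rule sum.shift_bounds_nat_ivl)
  then show ?thesis
    by (simp add: add.commute atLeast0LessThan)
qed

lemma sum_blocks:
  fixes f :: "nat \<Rightarrow> real"
  shows "(\<Sum>l<n * d. f l) = (\<Sum>i<n. \<Sum>j<d. f (i * d + j))"
proof -
  have "(\<Sum>l<n * d. f l) = (\<Sum>i<n. sum f {i * d..<i * d + d})"
    by (rule sum.nat_group[symmetric])
  then show ?thesis by (simp only: sum_block_one)
qed

lemma div_block: "0 < d \<Longrightarrow> j < d \<Longrightarrow> ((i::nat) * d + j) div d = i"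
  by (metis add.commute div_less div_mult_self1 not_less0 add_0 gr_implies_not0)

lemma block_norm2_sq: "(block_norm2 d h i)\<^sup>2 = (\<Sum>l<d. (h (i * d + l))\<^sup>2)"
  unfolding block_norm2_def by (simp add: sum_nonneg)

lemma block_norm2_nonneg: "block_norm2 d h i \<ge> 0"
  unfolding block_norm2_def by (simp add: sum_nonneg)

lemma block_norm2_restr:
  assumes "0 < d"
  shows "block_norm2 d (restr d S h) i = (if i \<in> S then block_norm2 d h i else 0)"
  using assms unfolding block_norm2_def restr_def by (auto intro!: sum.cong)

lemma norm2_restr:
  assumes "0 < d" "S \<subseteq> {..<n}"
  shows "norm2 (n * d) (restr d S h) = sqrt (\<Sum>i\<in>S. (block_norm2 d h i)\<^sup>2)"
proof -
  have "(\<Sum>l<n * d. (restr d S h l)\<^sup>2) = (\<Sum>i<n. \<Sum>j<d. (restr d S h (i * d + j))\<^sup>2)"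
    by (rule sum_blocks)
  also have "\<dots> = (\<Sum>i<n. if i \<in> S then (block_norm2 d h i)\<^sup>2 else 0)"
    using assms(1) by (intro sum.cong refl) (auto simp: restr_def block_norm2_sq)
  also have "\<dots> = (\<Sum>i\<in>S. (block_norm2 d h i)\<^sup>2)"
    using assms(2) by (simp add: sum.If_cases Int_absorb1)
  finally show ?thesis unfolding norm2_def by simp
qed

lemma vec_in_restr: "vec_in N h \<Longrightarrow> vec_in N (restr d S h)"
  unfolding vec_in_def restr_def by auto

lemma block_support_restr:
  assumes "0 < d"
  shows "block_support n d (restr d S h) \<subseteq> S"
proof
  fix i assume i: "i \<in> block_support n d (restr d S h)"
  show "i \<in> S"
  proof (rule ccontr)
    assume "i \<notin> S"
    then have "block d (restr d S h) i = (\<lambda>_. 0)"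
      using assms unfolding block_def restr_def by (auto simp: fun_eq_iff)
    then show False using i unfolding block_support_def by auto
  qed
qed

lemma block_sparse_restr:
  assumes "0 < d" "finite S" "card S \<le> k"
  shows "block_sparse n d k (restr d S h)"
  unfolding block_sparse_def
  using card_mono[OF assms(2) block_support_restr[OF assms(1), of n S h]] assms(3) by simp

lemma mat_vec_diff:
  "mat_vec m N A (\<lambda>l. u l - v l) = (\<lambda>j. mat_vec m N A u j - mat_vec m N A v j)"
  unfolding mat_vec_def by (auto simp: fun_eq_iff algebra_simps sum_subtractf)

lemma mat_vec_sum:
  "mat_vec m N A (\<lambda>l. \<Sum>c\<in>C. g c l) = (\<lambda>j. \<Sum>c\<in>C. mat_vec m N A (g c) j)"
  unfolding mat_vec_def by (auto simp: fun_eq_iff sum_distrib_left intro: sum.swap)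

lemma pnorm_sum:
  assumes "finite C" "0 < p" "p \<le> 1"
  shows "pnorm_pow m p (\<lambda>j. \<Sum>c\<in>C. g c j) \<le> (\<Sum>c\<in>C. pnorm_pow m p (g c))"
proof -
  have "pnorm_pow m p (\<lambda>j. \<Sum>c\<in>C. g c j) \<le> (\<Sum>j<m. \<Sum>c\<in>C. \<bar>g c j\<bar> powr p)"
    unfolding pnorm_pow_def by (intro sum_mono abs_sum_powr assms)
  also have "\<dots> = (\<Sum>c\<in>C. pnorm_pow m p (g c))"
    unfolding pnorm_pow_def by (rule sum.swap)
  finally show ?thesis .
qed

lemma pnorm_neg: "pnorm_pow m p (\<lambda>j. - v j) = pnorm_pow m p v"
  unfolding pnorm_pow_def by simp

lemma pnorm_nonneg: "pnorm_pow m p v \<ge> 0"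
  unfolding pnorm_pow_def by (simp add: sum_nonneg)

lemma norm2_nonneg: "norm2 N z \<ge> 0"
  unfolding norm2_def by (simp add: sum_nonneg)

lemma eps_lemma:
  fixes a b c :: real
  assumes "c \<ge> 0" "\<And>e. e > 0 \<Longrightarrow> a \<le> b + e * c"
  shows "a \<le> b"
proof (rule ccontr)
  assume "\<not> a \<le> b"
  then have ab: "a - b > 0" by simp
  define e where "e = (a - b) / (c + 1)"
  have e: "e > 0" using ab assms(1) by (simp add: e_def)
  have "e * c < a - b"
  proof -
    have "e * c = (a - b) * (c / (c + 1))" by (simp add: e_def)
    also have "\<dots> < (a - b) * 1" using ab assms(1) by (intro mult_strict_left_mono) auto
    finally show ?thesis by simp
  qed
  then show False using assms(2)[OF e] by simp
qed

lemma pnorm_upper: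
  assumes "0 < p"
  shows "pnorm_pow m p (mat_vec m N A z) \<le> (\<Sum>j<m. (\<Sum>l<N. \<bar>A j l\<bar>) powr p) * norm2 N z powr p"
proof -
  have "\<bar>mat_vec m N A z j\<bar> powr p \<le> (\<Sum>l<N. \<bar>A j l\<bar>) powr p * norm2 N z powr p" if "j < m" for j
  proof -
    have zl: "\<bar>z l\<bar> \<le> norm2 N z" if "l < N" for l
    proof -
      have "(z l)\<^sup>2 \<le> (\<Sum>l<N. (z l)\<^sup>2)"
        using that by (intro member_le_sum) auto
      then have "sqrt ((z l)\<^sup>2) \<le> sqrt (\<Sum>l<N. (z l)\<^sup>2)" by (rule real_sqrt_le_mono)
      then show ?thesis unfolding norm2_def by simp
    qed
    have "\<bar>mat_vec m N A z j\<bar> = \<bar>\<Sum>l<N. A j l * z l\<bar>"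
      using that unfolding mat_vec_def by simp
    also have "\<dots> \<le> (\<Sum>l<N. \<bar>A j l * z l\<bar>)" by (rule sum_abs)
    also have "\<dots> = (\<Sum>l<N. \<bar>A j l\<bar> * \<bar>z l\<bar>)" by (simp add: abs_mult)
    also have "\<dots> \<le> (\<Sum>l<N. \<bar>A j l\<bar> * norm2 N z)"
      using zl by (intro sum_mono mult_left_mono) auto
    also have "\<dots> = (\<Sum>l<N. \<bar>A j l\<bar>) * norm2 N z" by (simp add: sum_distrib_right)
    finally have "\<bar>mat_vec m N A z j\<bar> powr p \<le> ((\<Sum>l<N. \<bar>A j l\<bar>) * norm2 N z) powr p"
      using assms by (intro powr_mono2) auto
    also have "\<dots> = (\<Sum>l<N. \<bar>A j l\<bar>) powr p * norm2 N z powr p"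
      by (intro powr_mult)
    finally show ?thesis .
  qed
  then have "pnorm_pow m p (mat_vec m N A z) \<le> (\<Sum>j<m. (\<Sum>l<N. \<bar>A j l\<bar>) powr p * norm2 N z powr p)"
    unfolding pnorm_pow_def by (intro sum_mono) auto
  then show ?thesis by (simp add: sum_distrib_right)
qed

lemma ric_bounds:
  assumes "0 < p" "vec_in (n * d) z" "block_sparse n d s z"
  shows "block_p_ric m n d p A s \<ge> 0"
    and "(1 - block_p_ric m n d p A s) * norm2 (n * d) z powr p \<le> pnorm_pow m p (mat_vec m (n * d) A z)"
    and "pnorm_pow m p (mat_vec m (n * d) A z) \<le> (1 + block_p_ric m n d p A s) * norm2 (n * d) z powr p"
proof -
  define Good where "Good = (\<lambda>\<delta>. \<forall>z. vec_in (n * d) z \<and> block_sparse n d s z \<longrightarrow>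
        (1 - \<delta>) * norm2 (n * d) z powr p \<le> pnorm_pow m p (mat_vec m (n * d) A z) \<and>
        pnorm_pow m p (mat_vec m (n * d) A z) \<le> (1 + \<delta>) * norm2 (n * d) z powr p)"
  define D where "D = {\<delta>. \<delta> > 0 \<and> Good \<delta>}"
  have ric: "block_p_ric m n d p A s = Inf D" unfolding block_p_ric_def D_def Good_def by simp
  define C0 where "C0 = (\<Sum>j<m. (\<Sum>l<n * d. \<bar>A j l\<bar>) powr p)"
  have C0: "C0 \<ge> 0" unfolding C0_def by (simp add: sum_nonneg)
  have "C0 + 1 \<in> D"
  proof -
    have "(1 - (C0 + 1)) * norm2 (n * d) z powr p \<le> pnorm_pow m p (mat_vec m (n * d) A z)
       \<and> pnorm_pow m p (mat_vec m (n * d) A z) \<le> (1 + (C0 + 1)) * norm2 (n * d) z powr p" for z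
    proof
      have "(1 - (C0 + 1)) * norm2 (n * d) z powr p \<le> 0"
        using C0 by (simp add: mult_nonneg_nonneg)
      then show "(1 - (C0 + 1)) * norm2 (n * d) z powr p \<le> pnorm_pow m p (mat_vec m (n * d) A z)"
        using pnorm_nonneg[of m p] by (rule order_trans)
      have "pnorm_pow m p (mat_vec m (n * d) A z) \<le> C0 * norm2 (n * d) z powr p"
        unfolding C0_def by (rule pnorm_upper[OF assms(1)])
      also have "\<dots> \<le> (1 + (C0 + 1)) * norm2 (n * d) z powr p"
        by (intro mult_right_mono) auto
      finally show "pnorm_pow m p (mat_vec m (n * d) A z) \<le> (1 + (C0 + 1)) * norm2 (n * d) z powr p" .
    qed
    then have "Good (C0 + 1)" unfolding Good_def by blast
    then show ?thesis using C0 unfolding D_def by simp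
  qed
  then have ne: "D \<noteq> {}" by auto
  have lb: "\<And>x. x \<in> D \<Longrightarrow> 0 \<le> x" unfolding D_def by auto
  show "block_p_ric m n d p A s \<ge> 0" unfolding ric by (rule cInf_greatest[OF ne lb])
  have close: "\<exists>x\<in>D. x < Inf D + e" if "e > 0" for e
    using cInf_lessD[OF ne, of "Inf D + e"] that by simp
  let ?N = "norm2 (n * d) z powr p"
  let ?P = "pnorm_pow m p (mat_vec m (n * d) A z)"
  have N0: "?N \<ge> 0" by simp
  have gz: "(1 - x) * ?N \<le> ?P \<and> ?P \<le> (1 + x) * ?N" if "x \<in> D" for x
  proof -
    have "Good x" using that unfolding D_def by simp
    then show ?thesis unfolding Good_def using assms(2,3) by blast
  qed
  show "(1 - block_p_ric m n d p A s) * ?N \<le> ?P"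
  proof -
    have H: "(1 - Inf D) * ?N \<le> ?P + e * ?N" if e: "e > 0" for e
    proof -
      obtain x where x: "x \<in> D" "x < Inf D + e" using close[OF e] by blast
      have "(1 - x) * ?N \<le> ?P" using gz[OF x(1)] by blast
      moreover have "(1 - Inf D - e) * ?N \<le> (1 - x) * ?N"
        using x(2) N0 by (intro mult_right_mono) auto
      moreover have "(1 - Inf D - e) * ?N = (1 - Inf D) * ?N - e * ?N" by (rule left_diff_distrib)
      ultimately show ?thesis by linarith
    qed
    show ?thesis unfolding ric by (rule eps_lemma[OF N0 H])
  qed
  show "?P \<le> (1 + block_p_ric m n d p A s) * ?N"
  proof -
    have H: "?P \<le> (1 + Inf D) * ?N + e * ?N" if e: "e > 0" for e
    proof -
      obtain x where x: "x \<in> D" "x < Inf D + e" using close[OF e] by blast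
      have "?P \<le> (1 + x) * ?N" using gz[OF x(1)] by blast
      moreover have "(1 + x) * ?N \<le> (1 + Inf D + e) * ?N"
        using x(2) N0 by (intro mult_right_mono) auto
      moreover have "(1 + Inf D + e) * ?N = (1 + Inf D) * ?N + e * ?N" by (rule distrib_right)
      ultimately show ?thesis by linarith
    qed
    show ?thesis unfolding ric by (rule eps_lemma[OF N0 H])
  qed
qed

definition decr :: "nat list \<Rightarrow> (nat \<Rightarrow> real) \<Rightarrow> bool" where
  "decr L g \<longleftrightarrow> (\<forall>i j. i \<le> j \<longrightarrow> j < length L \<longrightarrow> g (L ! j) \<le> g (L ! i))"

definition chunk :: "nat list \<Rightarrow> nat \<Rightarrow> nat \<Rightarrow> nat set" where
  "chunk L K c = (\<lambda>i. L ! i) ` ({c * K..<c * K + K} \<inter> {..<length L})"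

lemma exists_sorted:
  fixes R :: "nat set" and b :: "nat \<Rightarrow> real"
  assumes "finite R"
  shows "\<exists>L. set L = R \<and> distinct L \<and> decr L b"
proof -
  define L where "L = sort_key (\<lambda>i. - b i) (sorted_list_of_set R)"
  have "set L = R" using assms unfolding L_def by simp
  moreover have "distinct L" unfolding L_def by simp
  moreover have "decr L b"
  proof -
    have s: "sorted (map (\<lambda>i. - b i) L)" unfolding L_def by (rule sorted_sort_key)
    show ?thesis unfolding decr_def
    proof (intro allI impI)
      fix i j assume ij: "i \<le> j" "j < length L"
      have "map (\<lambda>i. - b i) L ! i \<le> map (\<lambda>i. - b i) L ! j"
        using sorted_nth_mono[OF s, of i j] ij by simp
      then show "b (L ! j) \<le> b (L ! i)" using ij by simp
    qed
  qed
  ultimately show ?thesis by blast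
qed

lemma decr_powr:
  assumes "decr L b" "\<And>i. b i \<ge> 0" "0 < p"
  shows "decr L (\<lambda>i. b i powr p)"
  using assms unfolding decr_def by (auto intro: powr_mono2)

lemma inj_nth:
  assumes "distinct L" "I \<subseteq> {..<length L}"
  shows "inj_on (\<lambda>i. L ! i) I"
  using assms unfolding inj_on_def by (metis lessThan_iff nth_eq_iff_index_eq subsetD)

lemma card_nth_image:
  assumes "distinct L" "I \<subseteq> {..<length L}"
  shows "card ((\<lambda>i. L ! i) ` I) = card I"
proof (rule card_image)
  show "inj_on (\<lambda>i. L ! i) I"
    using assms by (rule inj_nth)
qed

lemma sum_nth_image:
  fixes f :: "nat \<Rightarrow> real"
  assumes "distinct L" "I \<subseteq> {..<length L}"
  shows "sum f ((\<lambda>i. L ! i) ` I) = (\<Sum>i\<in>I. f (L ! i))"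
proof -
  have "inj_on (\<lambda>i. L ! i) I"
    using assms by (rule inj_nth)
  then show ?thesis by (simp add: sum.reindex)
qed

lemma chunk_subset: "chunk L K c \<subseteq> set L"
  unfolding chunk_def by auto

lemma chunk_finite: "finite (chunk L K c)"
  unfolding chunk_def by auto

lemma chunk_card: "card (chunk L K c) \<le> K"
proof -
  have "card (chunk L K c) \<le> card ({c * K..<c * K + K} \<inter> {..<length L})"
    unfolding chunk_def by (rule card_image_le) auto
  also have "\<dots> \<le> card {c * K..<c * K + K}" by (intro card_mono) auto
  finally show ?thesis by simp
qed

lemma div_eq_from:
  assumes "c * K \<le> i" "i < c * K + (K::nat)"
  shows "i div K = c"
proof -
  have Kp: "0 < K" using assms by auto
  have "i = c * K + (i - c * K)" using assms by simp
  moreover have "i - c * K < K" using assms by simp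
  ultimately show ?thesis using div_block[OF Kp, of "i - c * K" c] by simp
qed

lemma chunk_disjoint:
  assumes "distinct L" "c \<noteq> c'"
  shows "chunk L K c \<inter> chunk L K c' = {}"
proof (rule ccontr)
  assume "chunk L K c \<inter> chunk L K c' \<noteq> {}"
  then obtain x where x: "x \<in> chunk L K c" "x \<in> chunk L K c'" by blast
  from x(1) obtain i where i: "i \<in> {c * K..<c * K + K}" "i < length L" and ei: "x = L ! i"
    unfolding chunk_def by blast
  from x(2) obtain i' where i': "i' \<in> {c' * K..<c' * K + K}" "i' < length L" and ei': "x = L ! i'"
    unfolding chunk_def by blast
  have eq: "L ! i = L ! i'" using ei ei' by simp
  have "i = i'" using eq i i' assms(1) by (simp add: nth_eq_iff_index_eq)
  then have "c = i div K" "c' = i div K" using i i' div_eq_from by auto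
  then show False using assms(2) by simp
qed

lemma chunk_union:
  assumes "length L \<le> J * K"
  shows "(\<Union>c<J. chunk L K c) = set L"
proof
  show "(\<Union>c<J. chunk L K c) \<subseteq> set L" using chunk_subset by blast
  show "set L \<subseteq> (\<Union>c<J. chunk L K c)"
  proof
    fix x assume "x \<in> set L"
    then obtain i where i: "i < length L" "x = L ! i" by (auto simp: in_set_conv_nth)
    have Kp: "K > 0" using i assms by (cases K) auto
    define c where "c = i div K"
    have "c * K \<le> i" unfolding c_def using div_mult_mod_eq[of i K] by linarith
    moreover have "i < c * K + K" unfolding c_def using Kp
      by (metis add.commute div_mult_mod_eq mod_less_divisor nat_add_left_cancel_less)
    moreover have "c < J"
    proof -
      have "i < J * K" using i assms by simp
      then show ?thesis unfolding c_def using Kp by (simp add: less_mult_imp_div_less)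
    qed
    ultimately have "x \<in> chunk L K c" using i unfolding chunk_def by auto
    then show "x \<in> (\<Union>c<J. chunk L K c)" using \<open>c < J\<close> by blast
  qed
qed

lemma sum_chunks:
  fixes f :: "nat \<Rightarrow> real"
  assumes "distinct L" "length L \<le> J * K"
  shows "(\<Sum>c<J. sum f (chunk L K c)) = sum f (set L)"
proof -
  have "sum f (\<Union>c<J. chunk L K c) = (\<Sum>c<J. sum f (chunk L K c))"
    using chunk_disjoint[OF assms(1)] by (intro sum.UNION_disjoint) (auto simp: chunk_finite)
  then show ?thesis using chunk_union[OF assms(2)] by simp
qed

lemma chunk_bound:
  fixes b :: "nat \<Rightarrow> real"
  assumes dL: "distinct L" and dec: "decr L b" and b0: "\<And>i. b i \<ge> 0" and p: "0 < p" "p \<le> 1"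
    and Kp: "0 < K"
  shows "sqrt (\<Sum>i\<in>chunk L K (Suc c). (b i)\<^sup>2) powr p
     \<le> real K powr (p / 2 - 1) * (\<Sum>i\<in>chunk L K c. b i powr p)"
proof (cases "chunk L K (Suc c) = {}")
  case True
  have "0 \<le> real K powr (p / 2 - 1) * (\<Sum>i\<in>chunk L K c. b i powr p)"
    by (intro mult_nonneg_nonneg sum_nonneg) auto
  then show ?thesis using True by simp
next
  case False
  then obtain i0 where i0: "Suc c * K \<le> i0" "i0 < length L"
    unfolding chunk_def by auto
  define t where "t = b (L ! (Suc c * K - 1))"
  have t0: "t \<ge> 0" unfolding t_def by (rule b0)
  have lenK: "Suc c * K \<le> length L" using i0 by simp
  have up: "b x \<le> t" if "x \<in> chunk L K (Suc c)" for x
  proof -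
    from that obtain i where i: "Suc c * K \<le> i" "i < length L" "x = L ! i"
      unfolding chunk_def by auto
    have "Suc c * K - 1 \<le> i" using i by simp
    then show ?thesis using dec i unfolding decr_def t_def by blast
  qed
  have low: "t \<le> b x" if "x \<in> chunk L K c" for x
  proof -
    from that obtain i where i: "i < c * K + K" "x = L ! i"
      unfolding chunk_def by auto
    have "i \<le> Suc c * K - 1" using i by simp
    moreover have "Suc c * K - 1 < length L" using lenK Kp by simp
    ultimately show ?thesis using dec i unfolding decr_def t_def by blast
  qed
  have Ieq: "{c * K..<c * K + K} \<inter> {..<length L} = {c * K..<c * K + K}" using lenK by auto
  have cardc: "card (chunk L K c) = K"
    unfolding chunk_def Ieq using dL lenK by (subst card_nth_image) auto
  have "(\<Sum>i\<in>chunk L K (Suc c). (b i)\<^sup>2) \<le> real (card (chunk L K (Suc c))) * t\<^sup>2"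
    using up b0 by (intro sum_bounded_above power_mono) auto
  also have "\<dots> \<le> real K * t\<^sup>2"
    using chunk_card[of L K "Suc c"] by (intro mult_right_mono) auto
  finally have s1: "(\<Sum>i\<in>chunk L K (Suc c). (b i)\<^sup>2) \<le> real K * t\<^sup>2" .
  have "sqrt (\<Sum>i\<in>chunk L K (Suc c). (b i)\<^sup>2) \<le> sqrt (real K * t\<^sup>2)"
    using s1 by (rule real_sqrt_le_mono)
  also have "\<dots> = sqrt (real K) * t" using t0 by (simp add: real_sqrt_mult)
  finally have s2: "sqrt (\<Sum>i\<in>chunk L K (Suc c). (b i)\<^sup>2) \<le> sqrt (real K) * t" .
  have "sqrt (\<Sum>i\<in>chunk L K (Suc c). (b i)\<^sup>2) powr p \<le> (sqrt (real K) * t) powr p"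
    using s2 p by (intro powr_mono2) (auto intro: sum_nonneg)
  also have "\<dots> = sqrt (real K) powr p * t powr p" by (rule powr_mult)
  also have "sqrt (real K) powr p = real K powr (p / 2)"
  proof -
    have "sqrt (real K) = real K powr (1/2)" by (simp add: powr_half_sqrt)
    then have "sqrt (real K) powr p = real K powr (1/2 * p)" by (simp only: powr_powr)
    then show ?thesis by simp
  qed
  also have "real K powr (p / 2) = real K powr (p / 2 - 1) * real K"
  proof -
    have "real K powr (p / 2) = real K powr (p / 2 - 1 + 1)" by simp
    also have "\<dots> = real K powr (p / 2 - 1) * real K powr 1" by (rule powr_add)
    finally show ?thesis using Kp by simp
  qed
  also have "real K powr (p / 2 - 1) * real K * t powr p
      = real K powr (p / 2 - 1) * (real K * t powr p)" by simp
  also have "\<dots> \<le> real K powr (p / 2 - 1) * (\<Sum>i\<in>chunk L K c. b i powr p)"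
  proof (intro mult_left_mono)
    have "real (card (chunk L K c)) * t powr p \<le> (\<Sum>i\<in>chunk L K c. b i powr p)"
      using low t0 p by (intro sum_bounded_below powr_mono2) auto
    then show "real K * t powr p \<le> (\<Sum>i\<in>chunk L K c. b i powr p)" using cardc by simp
  qed simp
  finally show ?thesis .
qed

lemma top_sum:
  fixes g :: "nat \<Rightarrow> real"
  assumes dL: "distinct L" and dec: "decr L g" and g0: "\<And>i. g i \<ge> 0"
    and B: "B \<subseteq> set L" "card B = q" and q: "q \<le> length L"
  shows "sum g B \<le> sum g ((\<lambda>i. L ! i) ` {..<q})"
proof -
  define C where "C = (\<lambda>i. L ! i) ` {..<q}"
  have fB: "finite B" using B(1) finite_subset by blast
  have fC: "finite C" unfolding C_def by simp
  have cC: "card C = q" unfolding C_def using dL q by (subst card_nth_image) auto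
  have CL: "C \<subseteq> set L" unfolding C_def using q by auto
  have cmp: "g y \<le> g x" if y: "y \<in> B - C" and x: "x \<in> C" for x y
  proof -
    from x obtain i where i: "i < q" "x = L ! i" unfolding C_def by auto
    have "y \<in> set L" using y B(1) by blast
    then obtain j where j: "j < length L" "y = L ! j" by (metis in_set_conv_nth)
    have "j \<ge> q"
    proof (rule ccontr)
      assume "\<not> q \<le> j"
      then have "y \<in> C" unfolding C_def using j by auto
      then show False using y by simp
    qed
    then have "i \<le> j" using i by simp
    then show ?thesis using dec i j unfolding decr_def by blast
  qed
  have cards: "card (B - C) = card (C - B)"
  proof -
    have "card B = card (B \<inter> C) + card (B - C)"
      using fB by (metis card_Int_Diff)
    moreover have "card C = card (C \<inter> B) + card (C - B)"
      using fC by (metis card_Int_Diff)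
    ultimately show ?thesis using B(2) cC by (simp add: Int_commute)
  qed
  have main: "sum g (B - C) \<le> sum g (C - B)"
  proof (cases "C - B = {}")
    case True
    then have "card (B - C) = 0" using cards by (metis card.empty)
    then have "B - C = {}" using fB by simp
    then show ?thesis using True by simp
  next
    case False
    define t where "t = Min (g ` (C - B))"
    have fCB: "finite (C - B)" using fC by simp
    have tle: "t \<le> g x" if "x \<in> C - B" for x
      unfolding t_def using fCB that by (intro Min_le) auto
    have tin: "t \<in> g ` (C - B)" unfolding t_def using fCB False by (intro Min_in) auto
    then obtain x0 where x0: "x0 \<in> C - B" "t = g x0" by auto
    have "sum g (B - C) \<le> real (card (B - C)) * t"
      using cmp x0 by (intro sum_bounded_above) auto
    also have "\<dots> = real (card (C - B)) * t" using cards by simp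
    also have "\<dots> \<le> sum g (C - B)"
      using tle by (intro sum_bounded_below) auto
    finally show ?thesis .
  qed
  have "sum g B = sum g (B \<inter> C) + sum g (B - C)" using fB by (rule sum.Int_Diff)
  also have "\<dots> \<le> sum g (B \<inter> C) + sum g (C - B)" using main by simp
  also have "\<dots> = sum g C" using fC by (simp add: sum.Int_Diff[of C g B] Int_commute)
  finally show ?thesis unfolding C_def .
qed

lemma top_in_chunk0:
  assumes "q \<le> K" "q \<le> length L"
  shows "(\<lambda>i. L ! i) ` {..<q} \<subseteq> chunk L K 0"
  using assms unfolding chunk_def by auto

lemma block_norm2_L2: "block_norm2 d f i = L2_set (\<lambda>l. f (i * d + l)) {..<d}"
  unfolding block_norm2_def L2_set_def by simp

lemma block_zero_outside:
  assumes "i < n" "i \<notin> block_support n d x"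
  shows "block_norm2 d x i = 0"
proof -
  have "block d x i = (\<lambda>_. 0)" using assms unfolding block_support_def by auto
  then have "x (i * d + l) = 0" if "l < d" for l
    using that unfolding block_def by (metis (mono_tags, lifting))
  then show ?thesis unfolding block_norm2_def by simp
qed

lemma weighted_split:
  fixes P :: "nat \<Rightarrow> real"
  assumes "finite A"
  shows "(\<Sum>i\<in>A. (if i \<in> Tt then \<omega> else 1) * P i) = (\<Sum>i\<in>A. P i) - (1 - \<omega>) * (\<Sum>i\<in>A \<inter> Tt. P i)"
proof -
  have "(\<Sum>i\<in>A. (if i \<in> Tt then \<omega> else 1) * P i) = (\<Sum>i\<in>A. P i - (1 - \<omega>) * (if i \<in> Tt then P i else 0))"
    by (intro sum.cong) (auto simp: algebra_simps)
  also have "\<dots> = (\<Sum>i\<in>A. P i) - (1 - \<omega>) * (\<Sum>i\<in>A. if i \<in> Tt then P i else 0)"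
    by (simp add: sum_subtractf sum_distrib_left)
  also have "(\<Sum>i\<in>A. if i \<in> Tt then P i else 0) = (\<Sum>i\<in>A \<inter> Tt. P i)"
    using assms by (simp add: sum.inter_restrict)
  finally show ?thesis .
qed

lemma cone:
  fixes x z :: "nat \<Rightarrow> real"
  assumes d: "0 < d" and p: "0 < p" "p \<le> 1" and om: "0 \<le> \<omega>" "\<omega> \<le> 1"
    and T0: "T0 = block_support n d x" and Tt: "Tt \<subseteq> {..<n}"
    and obj: "weighted_obj n d p \<omega> Tt z \<le> weighted_obj n d p \<omega> Tt x"
  shows "(\<Sum>i\<in>{..<n} - T0. block_norm2 d (\<lambda>l. z l - x l) i powr p)
     \<le> \<omega> * (\<Sum>i\<in>T0. block_norm2 d (\<lambda>l. z l - x l) i powr p)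
       + (1 - \<omega>) * ((\<Sum>i\<in>T0 - Tt. block_norm2 d (\<lambda>l. z l - x l) i powr p)
                    + (\<Sum>i\<in>Tt - T0. block_norm2 d (\<lambda>l. z l - x l) i powr p))"
proof -
  define h where "h = (\<lambda>l. z l - x l)"
  define P where "P i = block_norm2 d h i powr p" for i
  define bx where "bx i = block_norm2 d x i powr p" for i
  define bz where "bz i = block_norm2 d z i powr p" for i
  define w where "w i = (if i \<in> Tt then \<omega> else 1)" for i
  define R where "R = {..<n} - T0"
  have T0n: "T0 \<subseteq> {..<n}" unfolding T0 block_support_def by auto
  have fT0: "finite T0" using T0n finite_subset by blast
  have fR: "finite R" unfolding R_def by simp
  have w0: "w i \<ge> 0" for i unfolding w_def using om by simp
  have P0: "P i \<ge> 0" for i unfolding P_def by simp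
  have split: "{..<n} = T0 \<union> R" "T0 \<inter> R = {}" unfolding R_def using T0n by auto
  have xR: "bx i = 0" if "i \<in> R" for i
    using that block_zero_outside[of i n d x] p unfolding bx_def R_def T0 by auto
  have zR: "bz i = P i" if "i \<in> R" for i
  proof -
    have "block_norm2 d x i = 0"
      using that block_zero_outside[of i n d x] unfolding R_def T0 by auto
    then have "\<forall>l<d. x (i * d + l) = 0" unfolding block_norm2_def
      by (simp add: sum_nonneg_eq_0_iff)
    then have "block_norm2 d z i = block_norm2 d h i" unfolding block_norm2_def h_def
      by (intro arg_cong[where f=sqrt] sum.cong) auto
    then show ?thesis unfolding bz_def P_def by simp
  qed
  have zT: "bx i - P i \<le> bz i" for i
  proof -
    have "block_norm2 d x i = L2_set (\<lambda>l. z (i * d + l) + (x (i * d + l) - z (i * d + l))) {..<d}"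
      unfolding block_norm2_L2 by simp
    also have "\<dots> \<le> L2_set (\<lambda>l. z (i * d + l)) {..<d} + L2_set (\<lambda>l. x (i * d + l) - z (i * d + l)) {..<d}"
      by (rule L2_set_triangle_ineq)
    also have "L2_set (\<lambda>l. x (i * d + l) - z (i * d + l)) {..<d} = block_norm2 d h i"
      unfolding block_norm2_L2 h_def L2_set_def by (simp add: power2_commute)
    finally have "block_norm2 d x i \<le> block_norm2 d z i + block_norm2 d h i"
      unfolding block_norm2_L2 .
    then have "bx i \<le> (block_norm2 d z i + block_norm2 d h i) powr p"
      unfolding bx_def using p by (intro powr_mono2) (auto simp: block_norm2_nonneg)
    also have "\<dots> \<le> bz i + P i" unfolding bz_def P_def
      using p by (intro powr_subadd) (auto simp: block_norm2_nonneg)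
    finally show ?thesis by simp
  qed
  have objz: "weighted_obj n d p \<omega> Tt z = (\<Sum>i\<in>T0. w i * bz i) + (\<Sum>i\<in>R. w i * P i)"
  proof -
    have "weighted_obj n d p \<omega> Tt z = (\<Sum>i\<in>T0 \<union> R. w i * bz i)"
      unfolding weighted_obj_def w_def bz_def using split(1) by simp
    also have "\<dots> = (\<Sum>i\<in>T0. w i * bz i) + (\<Sum>i\<in>R. w i * bz i)"
      using fT0 fR split(2) by (rule sum.union_disjoint)
    also have "(\<Sum>i\<in>R. w i * bz i) = (\<Sum>i\<in>R. w i * P i)"
      using zR by simp
    finally show ?thesis .
  qed
  have objx: "weighted_obj n d p \<omega> Tt x = (\<Sum>i\<in>T0. w i * bx i)"
  proof -
    have "weighted_obj n d p \<omega> Tt x = (\<Sum>i\<in>T0 \<union> R. w i * bx i)"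
      unfolding weighted_obj_def w_def bx_def using split(1) by simp
    also have "\<dots> = (\<Sum>i\<in>T0. w i * bx i) + (\<Sum>i\<in>R. w i * bx i)"
      using fT0 fR split(2) by (rule sum.union_disjoint)
    also have "(\<Sum>i\<in>R. w i * bx i) = 0"
      using xR by simp
    finally show ?thesis by simp
  qed
  have "(\<Sum>i\<in>T0. w i * bx i) - (\<Sum>i\<in>T0. w i * P i) = (\<Sum>i\<in>T0. w i * (bx i - P i))"
    by (simp add: sum_subtractf right_diff_distrib)
  also have "\<dots> \<le> (\<Sum>i\<in>T0. w i * bz i)"
    using zT w0 by (intro sum_mono mult_left_mono) auto
  finally have c0: "(\<Sum>i\<in>R. w i * P i) \<le> (\<Sum>i\<in>T0. w i * P i)"
    using obj objz objx by linarith
  have e1: "(\<Sum>i\<in>R. w i * P i) = (\<Sum>i\<in>R. P i) - (1 - \<omega>) * (\<Sum>i\<in>R \<inter> Tt. P i)"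
    unfolding w_def using fR by (rule weighted_split)
  have e2: "(\<Sum>i\<in>T0. w i * P i) = (\<Sum>i\<in>T0. P i) - (1 - \<omega>) * (\<Sum>i\<in>T0 \<inter> Tt. P i)"
    unfolding w_def using fT0 by (rule weighted_split)
  have e3: "R \<inter> Tt = Tt - T0" unfolding R_def using Tt by auto
  have e4: "(\<Sum>i\<in>T0. P i) = (\<Sum>i\<in>T0 \<inter> Tt. P i) + (\<Sum>i\<in>T0 - Tt. P i)"
    using fT0 by (rule sum.Int_Diff)
  have "(\<Sum>i\<in>R. P i) \<le> \<omega> * (\<Sum>i\<in>T0. P i) + (1 - \<omega>) * ((\<Sum>i\<in>T0 - Tt. P i) + (\<Sum>i\<in>Tt - T0. P i))"
  proof -
    have "(\<Sum>i\<in>R. P i) - (1 - \<omega>) * (\<Sum>i\<in>Tt - T0. P i)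
        \<le> (\<Sum>i\<in>T0. P i) - (1 - \<omega>) * (\<Sum>i\<in>T0 \<inter> Tt. P i)"
      using c0 e1 e2 e3 by simp
    moreover have "(\<Sum>i\<in>T0. P i) - (1 - \<omega>) * (\<Sum>i\<in>T0 \<inter> Tt. P i)
        = \<omega> * (\<Sum>i\<in>T0. P i) + (1 - \<omega>) * (\<Sum>i\<in>T0 - Tt. P i)"
      using e4 by (simp add: algebra_simps)
    ultimately show ?thesis by (simp add: algebra_simps)
  qed
  then show ?thesis unfolding P_def h_def R_def .
qed

lemma mat_vec_add:
  "mat_vec m N A (\<lambda>l. u l + v l) = (\<lambda>j. mat_vec m N A u j + mat_vec m N A v j)"
  unfolding mat_vec_def by (auto simp: fun_eq_iff algebra_simps sum.distrib)

lemma sum_if_disjoint: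
  fixes v :: real
  assumes "finite C" "\<And>c c'. c \<in> C \<Longrightarrow> c' \<in> C \<Longrightarrow> c \<noteq> c' \<Longrightarrow> F c \<inter> F c' = {}"
  shows "(\<Sum>c\<in>C. if i \<in> F c then v else 0) = (if i \<in> (\<Union>c\<in>C. F c) then v else 0)"
proof (cases "i \<in> (\<Union>c\<in>C. F c)")
  case True
  then obtain c0 where c0: "c0 \<in> C" "i \<in> F c0" by auto
  have "(\<Sum>c\<in>C. if i \<in> F c then v else 0) = (\<Sum>c\<in>C. if c = c0 then v else 0)"
  proof (intro sum.cong refl)
    fix c assume c: "c \<in> C"
    show "(if i \<in> F c then v else 0) = (if c = c0 then v else 0)"
    proof (cases "c = c0")
      case False
      then have "F c \<inter> F c0 = {}" using assms(2) c c0 by blast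
      then show ?thesis using c0 False by auto
    qed (use c0 in simp)
  qed
  also have "\<dots> = v" using assms(1) c0 by simp
  finally show ?thesis using True by simp
next
  case False
  then show ?thesis by auto
qed

lemma decomp:
  assumes d: "0 < d" and vh: "vec_in (n * d) h" and dL: "distinct L"
    and sL: "set L = {..<n} - T0" and T0n: "T0 \<subseteq> {..<n}" and Kp: "0 < K"
  shows "h l = restr d (T0 \<union> chunk L K 0) h l + (\<Sum>c<length L. restr d (chunk L K (Suc c)) h l)"
proof -
  define i where "i = l div d"
  define U where "U = (\<Union>c\<in>{..<length L}. chunk L K (Suc c))"
  have s: "(\<Sum>c<length L. restr d (chunk L K (Suc c)) h l) = (if i \<in> U then h l else 0)"
    unfolding restr_def i_def[symmetric] U_def
  proof (rule sum_if_disjoint)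
    fix c c' assume "c \<in> {..<length L}" "c' \<in> {..<length L}" "c \<noteq> c'"
    then show "chunk L K (Suc c) \<inter> chunk L K (Suc c') = {}" by (intro chunk_disjoint[OF dL]) simp
  qed simp
  have dis: "(T0 \<union> chunk L K 0) \<inter> U = {}"
  proof -
    have "T0 \<inter> U = {}" unfolding U_def using chunk_subset[of L K] sL by blast
    moreover have "chunk L K 0 \<inter> U = {}" unfolding U_def using chunk_disjoint[OF dL] by blast
    ultimately show ?thesis by blast
  qed
  have cov: "i \<in> T0 \<union> chunk L K 0 \<or> i \<in> U" if "i < n"
  proof (cases "i \<in> T0")
    case False
    then have "i \<in> set L" using sL that by auto
    moreover have "length L \<le> Suc (length L) * K"
    proof -
      have "length L * 1 \<le> length L * K" using Kp by (intro mult_le_mono2) simp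
      then show ?thesis by (simp only: mult_Suc mult_1_right)
    qed
    ultimately have "i \<in> (\<Union>c<Suc (length L). chunk L K c)" using chunk_union by blast
    then obtain c where c: "c < Suc (length L)" "i \<in> chunk L K c" by blast
    show ?thesis
    proof (cases c)
      case 0 then show ?thesis using c by auto
    next
      case (Suc c') then show ?thesis using c unfolding U_def by auto
    qed
  qed simp
  show ?thesis
  proof (cases "i < n")
    case True
    then show ?thesis using s dis cov unfolding restr_def i_def[symmetric] by auto
  next
    case False
    have "\<not> l < n * d"
    proof
      assume "l < n * d"
      then have "l div d < n" by (simp add: less_mult_imp_div_less)
      then show False using False i_def by simp
    qed
    then have hl: "h l = 0" using vh unfolding vec_in_def by simp
    show ?thesis unfolding restr_def hl by simp
  qed
qed

lemma arith_final:
  fixes \<delta>1 \<delta>2 G \<beta> Z :: real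
  assumes d1: "\<delta>1 \<ge> 0" and b: "\<beta> > 0" and G: "G \<ge> 0" and Z: "Z \<ge> 0"
    and cond: "\<delta>1 + \<beta> / G * \<delta>2 < \<beta> / G - 1"
    and ineq: "(1 - \<delta>2) * Z \<le> (1 + \<delta>1) * (G / \<beta>) * Z"
  shows "Z = 0"
proof -
  have Gp: "G > 0"
  proof (rule ccontr)
    assume "\<not> G > 0"
    then have "G = 0" using G by simp
    then show False using cond d1 by simp
  qed
  define r where "r = \<beta> / G"
  have r: "r > 0" unfolding r_def using Gp b by simp
  have Gb: "G / \<beta> = 1 / r" unfolding r_def by simp
  have c1: "1 + \<delta>1 < r * (1 - \<delta>2)"
    using cond unfolding r_def[symmetric] by (simp add: right_diff_distrib)
  have "r * ((1 - \<delta>2) * Z) \<le> r * ((1 + \<delta>1) * (1 / r) * Z)"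
    using ineq Gb r by (intro mult_left_mono) auto
  also have "\<dots> = (1 + \<delta>1) * Z" using r by simp
  finally have c3: "r * (1 - \<delta>2) * Z \<le> (1 + \<delta>1) * Z" by (simp add: mult.assoc)
  show ?thesis
  proof (rule ccontr)
    assume "Z \<noteq> 0"
    then have "Z > 0" using Z by simp
    then have "(1 + \<delta>1) * Z < r * (1 - \<delta>2) * Z"
      using c1 by (intro mult_strict_right_mono) auto
    then show False using c3 by simp
  qed
qed

lemma key:
  fixes h :: "nat \<Rightarrow> real" and A :: "nat \<Rightarrow> nat \<Rightarrow> real"
  assumes d: "0 < d" and p: "0 < p" "p \<le> 1" and hk: "k > 0" and ha1: "a > 1"
    and vh: "vec_in (n * d) h" and Ah: "mat_vec m (n * d) A h = (\<lambda>_. 0)"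
    and T0n: "T0 \<subseteq> {..<n}" and cT0: "card T0 \<le> k" and Tt: "Tt \<subseteq> {..<n}"
    and rho: "real (card Tt) = \<rho> * real k"
    and alpha: "real (card (Tt \<inter> T0)) = \<alpha> * \<rho> * real k"
    and om: "0 \<le> \<omega>" "\<omega> \<le> 1"
    and ha: "real a \<ge> (1 - \<alpha>) * \<rho>"
    and hdelta: "block_p_ric m n d p A (a * k)
        + real a powr (1 - p / 2) / (\<omega> + (1 - \<omega>) * (1 + \<rho> - 2 * \<alpha> * \<rho>) powr (1 - p / 2))
          * block_p_ric m n d p A ((a + 1) * k)
      < real a powr (1 - p / 2) / (\<omega> + (1 - \<omega>) * (1 + \<rho> - 2 * \<alpha> * \<rho>) powr (1 - p / 2)) - 1"
    and cone: "(\<Sum>i\<in>{..<n} - T0. block_norm2 d h i powr p)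
     \<le> \<omega> * (\<Sum>i\<in>T0. block_norm2 d h i powr p)
       + (1 - \<omega>) * ((\<Sum>i\<in>T0 - Tt. block_norm2 d h i powr p)
                    + (\<Sum>i\<in>Tt - T0. block_norm2 d h i powr p))"
  shows "h = (\<lambda>_. 0)"
proof -
  define bh where "bh i = block_norm2 d h i" for i
  define P where "P i = bh i powr p" for i
  define R where "R = {..<n} - T0"
  define e where "e = 1 - p / 2"
  define G where "G = \<omega> + (1 - \<omega>) * (1 + \<rho> - 2 * \<alpha> * \<rho>) powr e"
  define \<delta>1 where "\<delta>1 = block_p_ric m n d p A (a * k)"
  define \<delta>2 where "\<delta>2 = block_p_ric m n d p A ((a + 1) * k)"
  define K where "K = a * k"
  have bh0: "bh i \<ge> 0" for i unfolding bh_def by (rule block_norm2_nonneg)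
  have P0: "P i \<ge> 0" for i unfolding P_def by simp
  have Kp: "K > 0" unfolding K_def using hk ha1 by simp
  have fR: "finite R" unfolding R_def by simp
  have fT0: "finite T0" using T0n finite_subset by blast
  have fTt: "finite Tt" using Tt finite_subset by blast
  obtain L where sL: "set L = R" and dL: "distinct L" and decL: "decr L bh"
    using exists_sorted[OF fR, of bh] by blast
  have decP: "decr L P" unfolding P_def using decr_powr[OF decL bh0 p(1)] .
  have lenL: "length L = card R" using dL sL distinct_card by fastforce
  define q where "q = card (Tt - T0)"
  have cTt: "card Tt = card (Tt \<inter> T0) + q" unfolding q_def using fTt by (rule card_Int_Diff)
  have q_real: "real q = \<rho> * real k - \<alpha> * \<rho> * real k" using cTt rho alpha by simp
  have qK: "q \<le> K"
  proof -
    have "real q = ((1 - \<alpha>) * \<rho>) * real k" using q_real by (simp add: algebra_simps)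
    also have "\<dots> \<le> real a * real k" using ha hk by (intro mult_right_mono) auto
    finally show ?thesis unfolding K_def by (metis of_nat_le_iff of_nat_mult)
  qed
  have qL: "q \<le> length L"
  proof -
    have "Tt - T0 \<subseteq> R" unfolding R_def using Tt by auto
    then show ?thesis unfolding q_def lenL using fR by (rule card_mono[rotated])
  qed
  define Top where "Top = (\<lambda>i. L ! i) ` {..<q}"
  have top: "(\<Sum>i\<in>Tt - T0. P i) \<le> (\<Sum>i\<in>Top. P i)"
    unfolding Top_def
  proof (rule top_sum[OF dL decP P0])
    show "Tt - T0 \<subseteq> set L" unfolding sL R_def using Tt by auto
  qed (simp_all add: qL[unfolded q_def] q_def)
  have Top0: "Top \<subseteq> chunk L K 0" unfolding Top_def by (rule top_in_chunk0[OF qK qL])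
  have chR: "chunk L K c \<subseteq> R" for c using chunk_subset[of L K c] sL by simp
  have TopR: "Top \<subseteq> R" using Top0 chR by blast
  have cTop: "card Top = q" unfolding Top_def using dL qL by (subst card_nth_image) auto
  define S where "S = (T0 - Tt) \<union> Top"
  define T01 where "T01 = T0 \<union> chunk L K 0"
  have fTop: "finite Top" unfolding Top_def by simp
  have T01n: "T01 \<subseteq> {..<n}" unfolding T01_def using T0n chR[of 0] R_def by auto
  have fT01: "finite T01" using T01n finite_subset by blast
  have ST01: "S \<subseteq> T01" unfolding S_def T01_def using Top0 by auto
  have fS: "finite S" using ST01 fT01 finite_subset by blast
  have sumS: "(\<Sum>i\<in>T0 - Tt. P i) + (\<Sum>i\<in>Top. P i) = (\<Sum>i\<in>S. P i)"
    unfolding S_def using fT0 fTop TopR unfolding R_def by (intro sum.union_disjoint[symmetric]) auto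
  have cS: "real (card S) \<le> (1 + \<rho> - 2 * \<alpha> * \<rho>) * real k"
  proof -
    have "card S \<le> card (T0 - Tt) + card Top" unfolding S_def by (rule card_Un_le)
    moreover have "card T0 = card (T0 \<inter> Tt) + card (T0 - Tt)" using fT0 by (rule card_Int_Diff)
    moreover have "card (T0 \<inter> Tt) = card (Tt \<inter> T0)" by (simp add: Int_commute)
    ultimately have "real (card S) \<le> real (card T0) - real (card (Tt \<inter> T0)) + real q"
      using cTop by simp
    also have "\<dots> \<le> real k - \<alpha> * \<rho> * real k + (\<rho> * real k - \<alpha> * \<rho> * real k)"
      using cT0 alpha q_real by simp
    finally show ?thesis by (simp add: algebra_simps)
  qed
  define Y where "Y = norm2 (n * d) (restr d T01 h)"
  have Yeq: "Y = sqrt (\<Sum>i\<in>T01. (bh i)\<^sup>2)" unfolding Y_def bh_def by (rule norm2_restr[OF d T01n])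
  have Y0: "Y \<ge> 0" unfolding Y_def by (rule norm2_nonneg)
  have sub_le: "sqrt (\<Sum>i\<in>X. (bh i)\<^sup>2) powr p \<le> Y powr p" if "X \<subseteq> T01" for X
  proof -
    have "(\<Sum>i\<in>X. (bh i)\<^sup>2) \<le> (\<Sum>i\<in>T01. (bh i)\<^sup>2)"
      using that fT01 by (intro sum_mono2) auto
    then have "sqrt (\<Sum>i\<in>X. (bh i)\<^sup>2) \<le> Y" unfolding Yeq by (rule real_sqrt_le_mono)
    then show ?thesis using p by (intro powr_mono2) (auto intro: sum_nonneg)
  qed
  have hS: "(\<Sum>i\<in>S. P i) \<le> ((1 + \<rho> - 2 * \<alpha> * \<rho>) * real k) powr e * Y powr p"
  proof -
    have "(\<Sum>i\<in>S. P i) \<le> real (card S) powr e * sqrt (\<Sum>i\<in>S. (bh i)\<^sup>2) powr p"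
      unfolding P_def e_def using fS p bh0 by (intro power_mean) auto
    also have "\<dots> \<le> ((1 + \<rho> - 2 * \<alpha> * \<rho>) * real k) powr e * Y powr p"
      using cS p unfolding e_def by (intro mult_mono[OF powr_mono2 sub_le[OF ST01]]) auto
    finally show ?thesis .
  qed
  have hT0: "(\<Sum>i\<in>T0. P i) \<le> real k powr e * Y powr p"
  proof -
    have "(\<Sum>i\<in>T0. P i) \<le> real (card T0) powr e * sqrt (\<Sum>i\<in>T0. (bh i)\<^sup>2) powr p"
      unfolding P_def e_def using fT0 p bh0 by (intro power_mean) auto
    also have "\<dots> \<le> real k powr e * Y powr p"
      using cT0 p unfolding e_def by (intro mult_mono[OF powr_mono2 sub_le]) (auto simp: T01_def)
    finally show ?thesis .
  qed
  have stepA: "(\<Sum>i\<in>R. P i) \<le> G * real k powr e * Y powr p"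
  proof -
    have "(\<Sum>i\<in>R. P i) \<le> \<omega> * (\<Sum>i\<in>T0. P i) + (1 - \<omega>) * (\<Sum>i\<in>S. P i)"
      using cone top sumS om unfolding P_def bh_def R_def
      by (smt (verit, best) mult_left_mono)
    also have "\<dots> \<le> \<omega> * (real k powr e * Y powr p)
        + (1 - \<omega>) * (((1 + \<rho> - 2 * \<alpha> * \<rho>) * real k) powr e * Y powr p)"
      using hT0 hS om by (intro add_mono mult_left_mono) auto
    also have "((1 + \<rho> - 2 * \<alpha> * \<rho>) * real k) powr e = (1 + \<rho> - 2 * \<alpha> * \<rho>) powr e * real k powr e"
      by (rule powr_mult)
    also have "\<omega> * (real k powr e * Y powr p) + (1 - \<omega>) * ((1 + \<rho> - 2 * \<alpha> * \<rho>) powr e * real k powr e * Y powr p)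
        = G * real k powr e * Y powr p" unfolding G_def by (simp add: algebra_simps)
    finally show ?thesis .
  qed
  define J where "J = length L"
  define Gc where "Gc c = restr d (chunk L K (Suc c)) h" for c
  have sL': "set L = {..<n} - T0" using sL unfolding R_def .
  have hfun: "h = (\<lambda>l. restr d T01 h l + (\<Sum>c<J. Gc c l))"
    unfolding T01_def J_def Gc_def by (rule ext) (rule decomp[OF d vh dL sL' T0n Kp])
  have "mat_vec m (n * d) A (\<lambda>l. restr d T01 h l + (\<Sum>c<J. Gc c l))
      = (\<lambda>j. mat_vec m (n * d) A (restr d T01 h) j + (\<Sum>c<J. mat_vec m (n * d) A (Gc c) j))"
    by (simp add: mat_vec_add mat_vec_sum)
  then have "(\<lambda>j. mat_vec m (n * d) A (restr d T01 h) j + (\<Sum>c<J. mat_vec m (n * d) A (Gc c) j)) = (\<lambda>_. 0)"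
    using Ah hfun by simp
  then have MT: "mat_vec m (n * d) A (restr d T01 h) = (\<lambda>j. - (\<Sum>c<J. mat_vec m (n * d) A (Gc c) j))"
    by (auto simp: fun_eq_iff eq_neg_iff_add_eq_0)
  have chn: "chunk L K c \<subseteq> {..<n}" for c using chR[of c] unfolding R_def by auto
  have cT01: "card T01 \<le> (a + 1) * k"
  proof -
    have "card T01 \<le> card T0 + card (chunk L K 0)" unfolding T01_def by (rule card_Un_le)
    also have "\<dots> \<le> k + K" using cT0 chunk_card[of L K 0] by simp
    finally show ?thesis unfolding K_def by (simp add: algebra_simps)
  qed
  have spGc: "block_sparse n d (a * k) (Gc c)" for c
    unfolding Gc_def using chunk_card[of L K "Suc c"] unfolding K_def
    by (intro block_sparse_restr[OF d chunk_finite]) auto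
  have vGc: "vec_in (n * d) (Gc c)" for c unfolding Gc_def by (rule vec_in_restr[OF vh])
  have d1: "\<delta>1 \<ge> 0" unfolding \<delta>1_def by (rule ric_bounds(1)[OF p(1) vGc spGc])
  have lower: "(1 - \<delta>2) * Y powr p \<le> pnorm_pow m p (mat_vec m (n * d) A (restr d T01 h))"
    unfolding \<delta>2_def Y_def
    by (rule ric_bounds(2)[OF p(1) vec_in_restr[OF vh] block_sparse_restr[OF d fT01 cT01]])
  have eachc: "pnorm_pow m p (mat_vec m (n * d) A (Gc c))
      \<le> (1 + \<delta>1) * (real K powr (p / 2 - 1) * (\<Sum>i\<in>chunk L K c. P i))" for c
  proof -
    have "pnorm_pow m p (mat_vec m (n * d) A (Gc c)) \<le> (1 + \<delta>1) * norm2 (n * d) (Gc c) powr p"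
      unfolding \<delta>1_def by (rule ric_bounds(3)[OF p(1) vGc spGc])
    also have "norm2 (n * d) (Gc c) = sqrt (\<Sum>i\<in>chunk L K (Suc c). (bh i)\<^sup>2)"
      unfolding Gc_def bh_def by (rule norm2_restr[OF d chn])
    also have "(1 + \<delta>1) * sqrt (\<Sum>i\<in>chunk L K (Suc c). (bh i)\<^sup>2) powr p
        \<le> (1 + \<delta>1) * (real K powr (p / 2 - 1) * (\<Sum>i\<in>chunk L K c. P i))"
      unfolding P_def using d1 by (intro mult_left_mono chunk_bound[OF dL decL bh0 p Kp]) auto
    finally show ?thesis .
  qed
  have chsum: "(\<Sum>c<J. \<Sum>i\<in>chunk L K c. P i) \<le> (\<Sum>i\<in>R. P i)"
  proof -
    have "length L \<le> Suc J * K"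
    proof -
      have "length L * 1 \<le> length L * K" using Kp by (intro mult_le_mono2) simp
      then show ?thesis unfolding J_def by (simp only: mult_Suc mult_1_right)
    qed
    then have "(\<Sum>c<Suc J. \<Sum>i\<in>chunk L K c. P i) = (\<Sum>i\<in>set L. P i)"
      by (rule sum_chunks[OF dL])
    moreover have "(\<Sum>c<J. \<Sum>i\<in>chunk L K c. P i) \<le> (\<Sum>c<Suc J. \<Sum>i\<in>chunk L K c. P i)"
      using P0 by (simp add: sum_nonneg)
    ultimately show ?thesis using sL by simp
  qed
  have Kpow0: "real K powr (p / 2 - 1) \<ge> 0" by simp
  have stepB: "(1 - \<delta>2) * Y powr p \<le> (1 + \<delta>1) * (real K powr (p / 2 - 1) * (\<Sum>i\<in>R. P i))"
  proof -
    have "pnorm_pow m p (mat_vec m (n * d) A (restr d T01 h))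
        = pnorm_pow m p (\<lambda>j. \<Sum>c<J. mat_vec m (n * d) A (Gc c) j)"
      unfolding MT by (rule pnorm_neg)
    also have "\<dots> \<le> (\<Sum>c<J. pnorm_pow m p (mat_vec m (n * d) A (Gc c)))"
      using p by (intro pnorm_sum) auto
    also have "\<dots> \<le> (\<Sum>c<J. (1 + \<delta>1) * (real K powr (p / 2 - 1) * (\<Sum>i\<in>chunk L K c. P i)))"
      by (intro sum_mono eachc)
    also have "\<dots> = (1 + \<delta>1) * (real K powr (p / 2 - 1) * (\<Sum>c<J. \<Sum>i\<in>chunk L K c. P i))"
      by (simp add: sum_distrib_left)
    also have "\<dots> \<le> (1 + \<delta>1) * (real K powr (p / 2 - 1) * (\<Sum>i\<in>R. P i))"
      using d1 Kpow0 chsum by (intro mult_left_mono) auto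
    finally show ?thesis using lower by linarith
  qed
  define \<beta> where "\<beta> = real a powr e"
  have bp: "\<beta> > 0" unfolding \<beta>_def using ha1 by simp
  have G0: "G \<ge> 0" unfolding G_def using om by (intro add_nonneg_nonneg mult_nonneg_nonneg) auto
  have Kk: "real K powr (p / 2 - 1) * (G * real k powr e * Y powr p) = (G / \<beta>) * Y powr p"
  proof -
    have "real K powr (p / 2 - 1) = real a powr (p / 2 - 1) * real k powr (p / 2 - 1)"
      unfolding K_def by (simp add: powr_mult)
    moreover have "real k powr (p / 2 - 1) * real k powr e = 1"
    proof -
      have "real k powr (p / 2 - 1) * real k powr e = real k powr (p / 2 - 1 + e)"
        by (rule powr_add[symmetric])
      also have "\<dots> = 1" unfolding e_def using hk by simp
      finally show ?thesis .
    qed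
    moreover have "real a powr (p / 2 - 1) = 1 / \<beta>"
      unfolding \<beta>_def e_def using powr_minus_divide[of "real a" "1 - p / 2"] by simp
    ultimately show ?thesis by (simp add: field_simps)
  qed
  have fin_ineq: "(1 - \<delta>2) * Y powr p \<le> (1 + \<delta>1) * (G / \<beta>) * Y powr p"
  proof -
    have "(1 + \<delta>1) * (real K powr (p / 2 - 1) * (\<Sum>i\<in>R. P i))
        \<le> (1 + \<delta>1) * (real K powr (p / 2 - 1) * (G * real k powr e * Y powr p))"
      using d1 Kpow0 stepA by (intro mult_left_mono) auto
    then show ?thesis using stepB Kk by (simp add: mult.assoc)
  qed
  have cond: "\<delta>1 + \<beta> / G * \<delta>2 < \<beta> / G - 1"
    using hdelta unfolding \<beta>_def G_def e_def \<delta>1_def \<delta>2_def .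
  have "Y powr p = 0" using arith_final[OF d1 bp G0 _ cond fin_ineq] by simp
  then have Yz: "Y = 0" by simp
  have sumz: "(\<Sum>i\<in>T01. (bh i)\<^sup>2) = 0"
    using Yz unfolding Yeq by (simp add: sum_nonneg)
  have bT01: "bh i = 0" if "i \<in> T01" for i
    using sumz fT01 that by (simp add: sum_nonneg_eq_0_iff)
  have "(\<Sum>i\<in>R. P i) \<le> 0" using stepA Yz p by simp
  then have "(\<Sum>i\<in>R. P i) = 0" using P0 by (intro antisym sum_nonneg) auto
  then have bR: "bh i = 0" if "i \<in> R" for i
    using fR that P0 unfolding P_def by (simp add: sum_nonneg_eq_0_iff)
  have ball: "bh i = 0" if "i < n" for i
    using that bT01 bR unfolding T01_def R_def by auto
  show ?thesis
  proof (rule ext)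
    fix l
    show "h l = 0"
    proof (cases "l < n * d")
      case True
      define i where "i = l div d"
      define j where "j = l mod d"
      have i: "i < n" unfolding i_def using True by (simp add: less_mult_imp_div_less)
      have j: "j < d" unfolding j_def using d by simp
      have lij: "l = i * d + j" unfolding i_def j_def by simp
      have "(\<Sum>l<d. (h (i * d + l))\<^sup>2) = 0"
        using ball[OF i] block_norm2_sq[of d h i] unfolding bh_def by simp
      then have "(h (i * d + j))\<^sup>2 = 0" using j by (simp add: sum_nonneg_eq_0_iff)
      then show ?thesis using lij by simp
    next
      case False
      then show ?thesis using vh unfolding vec_in_def by simp
    qed
  qed
qed

theorem corollary1:
  fixes m n d k :: nat and p \<omega> \<rho> \<alpha> :: real and a :: nat
    and A :: "nat \<Rightarrow> nat \<Rightarrow> real" and x y :: "nat \<Rightarrow> real"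
    and T0 Tt :: "nat set"
  assumes hp: "0 < p" "p \<le> 1"
    and hk: "k > 0"
    and hx: "vec_in (n * d) x" "block_sparse n d k x"
    and hT0: "T0 = block_support n d x"
    and hy: "y = mat_vec m (n * d) A x"
    and hTt: "Tt \<subseteq> {..<n}"
    and hrho: "\<rho> \<ge> 0" "real (card Tt) = \<rho> * real k"
    and halpha: "\<alpha> \<ge> 0" "real (card (Tt \<inter> T0)) = \<alpha> * \<rho> * real k"
    and homega: "0 \<le> \<omega>" "\<omega> \<le> 1"
    and ha: "real a \<ge> (1 - \<alpha>) * \<rho>" "a > 1"
    and hdelta: "block_p_ric m n d p A (a * k)
        + real a powr (1 - p / 2) / (\<omega> + (1 - \<omega>) * (1 + \<rho> - 2 * \<alpha> * \<rho>) powr (1 - p / 2))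
          * block_p_ric m n d p A ((a + 1) * k)
      < real a powr (1 - p / 2) / (\<omega> + (1 - \<omega>) * (1 + \<rho> - 2 * \<alpha> * \<rho>) powr (1 - p / 2)) - 1"
  shows "\<forall>z. vec_in (n * d) z \<and> mat_vec m (n * d) A z = y \<and> z \<noteq> x \<longrightarrow>
           weighted_obj n d p \<omega> Tt x < weighted_obj n d p \<omega> Tt z"
proof (intro allI impI)
  fix z assume H: "vec_in (n * d) z \<and> mat_vec m (n * d) A z = y \<and> z \<noteq> x"
  then have vz: "vec_in (n * d) z" and Az: "mat_vec m (n * d) A z = y" and zx: "z \<noteq> x" by auto
  show "weighted_obj n d p \<omega> Tt x < weighted_obj n d p \<omega> Tt z"
  proof (rule ccontr)
    assume "\<not> weighted_obj n d p \<omega> Tt x < weighted_obj n d p \<omega> Tt z"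
    then have obj: "weighted_obj n d p \<omega> Tt z \<le> weighted_obj n d p \<omega> Tt x" by simp
    have d: "0 < d"
    proof (rule ccontr)
      assume "\<not> 0 < d"
      then have "n * d = 0" by simp
      then have "z = x" using vz hx(1) unfolding vec_in_def by (auto simp: fun_eq_iff)
      then show False using zx by simp
    qed
    define h where "h = (\<lambda>l. z l - x l)"
    have vh: "vec_in (n * d) h" using vz hx(1) unfolding vec_in_def h_def by simp
    have Ah: "mat_vec m (n * d) A h = (\<lambda>_. 0)"
      unfolding h_def mat_vec_diff using Az hy by simp
    have T0n: "T0 \<subseteq> {..<n}" unfolding hT0 block_support_def by auto
    have cT0: "card T0 \<le> k" using hx(2) unfolding block_sparse_def hT0 .
    have cn: "(\<Sum>i\<in>{..<n} - T0. block_norm2 d h i powr p)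
     \<le> \<omega> * (\<Sum>i\<in>T0. block_norm2 d h i powr p)
       + (1 - \<omega>) * ((\<Sum>i\<in>T0 - Tt. block_norm2 d h i powr p)
                    + (\<Sum>i\<in>Tt - T0. block_norm2 d h i powr p))"
      unfolding h_def by (rule cone[OF d hp homega hT0 hTt obj])
    have "h = (\<lambda>_. 0)"
      by (rule key[OF d hp hk ha(2) vh Ah T0n cT0 hTt hrho(2) halpha(2) homega ha(1) hdelta cn])
    then have "z = x" unfolding h_def by (auto simp: fun_eq_iff)
    then show False using zx by simp
  qed
qed

end
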